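(* Let $f:\mathbb{C}^2\to\mathbb{C}$ be a convenient mixed polynomial that is Newton non-degenerate. Then $f$ has an inner Newton non-degenerate boundary.
   Context: A mixed polynomial is $f=\sum c_{\nu,\mu}z^\nu\bar z^\mu$ with $z=(u,v)\in\mathbb{C}^2$, $z^\nu=u^{\nu_1}v^{\nu_2}$, $\bar z^\mu=\bar u^{\mu_1}\bar v^{\mu_2}$, regarded as a real map $\mathbb{R}^4\to\mathbb{R}^2$. $V_f=f^{-1}(0)$; $\Sigma_f$ (critical points) is the set where the real Jacobian has rank $<2$, equivalently the common zeros of $f_u\overline{f_{\bar v}}-\overline{f_{\bar u}}f_v$, $|f_u|^2-|f_{\bar u}|^2$, $|f_v|^2-|f_{\bar v}|^2$ (Wirtinger derivatives). $(\mathbb{C}^* )^2=(\mathbb{C}\setminus\{0\})^2$. Newton data: $\mathrm{supp}(f)=\{\nu+\mu:c_{\nu,\mu}\ne0\}$; $\Gamma_+(f)$ = convex hull of $\bigcup_{w\in\mathrm{supp}(f)}(w+\mathbb{R}^2_{\ge0})$, assumed to have at least one compact 1-face; $\Gamma(f)$ = lattice points on compact faces. $f$ is convenient if $\Gamma(f)$ meets both coordinate axes. For a compact face $\Delta$ (vertex or edge), $f_\Delta$ is the sum of terms with $\nu+\mu\in\Delta$. The compact 1-faces are $\Delta(P_1),\dots,\Delta(P_N)$, $P_i=(p_{i,1},p_{i,2})$ the primitive positive weight vector orthogonal to the edge, ordered so $p_{i,1}/p_{i,2}$ strictly decreases (so $\Delta(P_1)$ is the steepest edge); $f_{P_i}:=f_{\Delta(P_i)}$.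 A vertex is extreme if it lies on exactly one compact 1-face, non-extreme if on two. $f$ is Newton non-degenerate (Oka) if for every compact face $\Delta$ (vertices and edges), $V_{f_\Delta}\cap\Sigma_{f_\Delta}\cap(\mathbb{C}^* )^2=\emptyset$. $f$ has an inner Newton non-degenerate boundary if (i) $f_{P_1}$ has no critical points in $V_{f_{P_1}}\cap\{v\neq0\}$ and $f_{P_N}$ none in $V_{f_{P_N}}\cap\{u\ne0\}$; (ii) for each compact 1-face and non-extreme vertex $\Delta$, $f_\Delta$ has no critical points in $V_{f_\Delta}\cap(\mathbb{C}^* )^2$. *)

theory Defs
  imports "HOL-Analysis.Analysis"
begin

text \<open>A mixed polynomial in z = (u,v): coefficient function
  c ((nu1,nu2),(mu1,mu2)) for the monomial u^nu1 v^nu2 conj(u)^mu1 conj(v)^mu2,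
  with finite support.\<close>

type_synonym mixed_poly = "(nat \<times> nat) \<times> (nat \<times> nat) \<Rightarrow> complex"

definition mixed_poly :: "mixed_poly \<Rightarrow> bool" where
  "mixed_poly c \<longleftrightarrow> finite {k. c k \<noteq> 0}"

definition mp_eval :: "mixed_poly \<Rightarrow> complex \<times> complex \<Rightarrow> complex" where
  "mp_eval c z = (\<Sum>k\<in>{k. c k \<noteq> 0}.
      c k * fst z ^ fst (fst k) * snd z ^ snd (fst k)
          * cnj (fst z) ^ fst (snd k) * cnj (snd z) ^ snd (snd k))"

definition mp_supp :: "mixed_poly \<Rightarrow> (nat \<times> nat) set" where
  "mp_supp c = {(fst (fst k) + fst (snd k), snd (fst k) + snd (snd k)) | k. c k \<noteq> 0}"

definition Gamma_plus :: "mixed_poly \<Rightarrow> (real \<times> real) set" where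
  "Gamma_plus c = convex hull (\<Union>w\<in>mp_supp c.
      {x. real (fst w) \<le> fst x \<and> real (snd w) \<le> snd x})"

definition wt :: "real \<times> real \<Rightarrow> real \<times> real \<Rightarrow> real" where
  "wt P x = fst P * fst x + snd P * snd x"

definition pos_weight :: "real \<times> real \<Rightarrow> bool" where
  "pos_weight P \<longleftrightarrow> 0 < fst P \<and> 0 < snd P"

text \<open>The compact face Delta(P) of Gamma_+(f) where the positive weight P
  attains its minimum. The compact faces of Gamma_+ are exactly these sets.\<close>
definition face :: "mixed_poly \<Rightarrow> real \<times> real \<Rightarrow> (real \<times> real) set" where
  "face c P = {x \<in> Gamma_plus c. \<forall>y\<in>Gamma_plus c. wt P x \<le> wt P y}"

definition compact_face :: "mixed_poly \<Rightarrow> (real \<times> real) set \<Rightarrow> bool" where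
  "compact_face c D \<longleftrightarrow> (\<exists>P. pos_weight P \<and> D = face c P \<and> D \<noteq> {})"

definition edge_weight :: "mixed_poly \<Rightarrow> real \<times> real \<Rightarrow> bool" where
  "edge_weight c P \<longleftrightarrow> pos_weight P \<and> (\<exists>x y. x \<in> face c P \<and> y \<in> face c P \<and> x \<noteq> y)"

definition compact_edge :: "mixed_poly \<Rightarrow> (real \<times> real) set \<Rightarrow> bool" where
  "compact_edge c D \<longleftrightarrow> (\<exists>P. edge_weight c P \<and> D = face c P)"

definition vertex :: "mixed_poly \<Rightarrow> real \<times> real \<Rightarrow> bool" where
  "vertex c x \<longleftrightarrow> compact_face c {x}"

definition nonextreme_vertex :: "mixed_poly \<Rightarrow> real \<times> real \<Rightarrow> bool" where
  "nonextreme_vertex c x \<longleftrightarrow> vertex c x \<and>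
     (\<exists>D1 D2. compact_edge c D1 \<and> compact_edge c D2 \<and> D1 \<noteq> D2 \<and> x \<in> D1 \<and> x \<in> D2)"

definition Gamma :: "mixed_poly \<Rightarrow> (nat \<times> nat) set" where
  "Gamma c = {w. \<exists>D. compact_face c D \<and> (real (fst w), real (snd w)) \<in> D}"

definition convenient :: "mixed_poly \<Rightarrow> bool" where
  "convenient c \<longleftrightarrow> (\<exists>a. (a, 0) \<in> Gamma c) \<and> (\<exists>b. (0, b) \<in> Gamma c)"

definition face_part :: "mixed_poly \<Rightarrow> (real \<times> real) set \<Rightarrow> mixed_poly" where
  "face_part c D = (\<lambda>k. if (real (fst (fst k) + fst (snd k)), real (snd (fst k) + snd (snd k))) \<in> D
                         then c k else 0)"

text \<open>Critical point of g : C^2 = R^4 \<rightarrow> C = R^2: the real Jacobian has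
  rank < 2, i.e. the real derivative is not surjective.\<close>
definition critical_point :: "(complex \<times> complex \<Rightarrow> complex) \<Rightarrow> complex \<times> complex \<Rightarrow> bool" where
  "critical_point g z \<longleftrightarrow> (\<exists>D. (g has_derivative D) (at z) \<and> \<not> surj D)"

definition no_crit_on :: "mixed_poly \<Rightarrow> (complex \<times> complex) set \<Rightarrow> bool" where
  "no_crit_on c A \<longleftrightarrow>
     (\<forall>z\<in>A. mp_eval c z = 0 \<longrightarrow> \<not> critical_point (mp_eval c) z)"

definition torus :: "(complex \<times> complex) set" where
  "torus = {z. fst z \<noteq> 0 \<and> snd z \<noteq> 0}"

definition newton_nondegenerate :: "mixed_poly \<Rightarrow> bool" where
  "newton_nondegenerate c \<longleftrightarrow>
     (\<forall>D. compact_face c D \<longrightarrow> no_crit_on (face_part c D) torus)"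

text \<open>P_1: edge weight with largest ratio p1/p2 (steepest edge);
  P_N: edge weight with smallest ratio.\<close>
definition first_edge_weight :: "mixed_poly \<Rightarrow> real \<times> real \<Rightarrow> bool" where
  "first_edge_weight c P \<longleftrightarrow> edge_weight c P \<and>
     (\<forall>Q. edge_weight c Q \<longrightarrow> fst Q / snd Q \<le> fst P / snd P)"

definition last_edge_weight :: "mixed_poly \<Rightarrow> real \<times> real \<Rightarrow> bool" where
  "last_edge_weight c P \<longleftrightarrow> edge_weight c P \<and>
     (\<forall>Q. edge_weight c Q \<longrightarrow> fst P / snd P \<le> fst Q / snd Q)"

definition inner_nondegenerate_boundary :: "mixed_poly \<Rightarrow> bool" where
  "inner_nondegenerate_boundary c \<longleftrightarrow>
     (\<forall>P. first_edge_weight c P \<longrightarrow>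
          no_crit_on (face_part c (face c P)) {z. snd z \<noteq> 0}) \<and>
     (\<forall>P. last_edge_weight c P \<longrightarrow>
          no_crit_on (face_part c (face c P)) {z. fst z \<noteq> 0}) \<and>
     (\<forall>D. compact_edge c D \<longrightarrow> no_crit_on (face_part c D) torus) \<and>
     (\<forall>x. nonextreme_vertex c x \<longrightarrow> no_crit_on (face_part c {x}) torus)"

end

theory Submission
  imports Defs
begin

definition pt :: "nat \<times> nat \<Rightarrow> real \<times> real" where
  "pt w = (real (fst w), real (snd w))"

lemma wt_inner: "wt a x = inner a x"
  by (cases a; cases x) (simp add: wt_def)

lemma supp_fin: "mixed_poly c \<Longrightarrow> finite (mp_supp c)"
proof -
  assume "mixed_poly c"
  have "mp_supp c = (\<lambda>k. (fst (fst k) + fst (snd k), snd (fst k) + snd (snd k))) ` {k. c k \<noteq> 0}"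
    unfolding mp_supp_def by (rule setcompr_eq_image)
  thus ?thesis using \<open>mixed_poly c\<close> by (simp add: mixed_poly_def)
qed

lemma supp_Gp: "w \<in> mp_supp c \<Longrightarrow> pt w \<in> Gamma_plus c"
  unfolding Gamma_plus_def pt_def by (rule hull_inc) auto

lemma lowerL:
  assumes "0 \<le> fst a" "0 \<le> snd a" "\<forall>w\<in>mp_supp c. m \<le> wt a (pt w)" "x \<in> Gamma_plus c"
  shows "m \<le> wt a x"
proof -
  have "Gamma_plus c \<subseteq> {x. m \<le> wt a x}"
    unfolding Gamma_plus_def
  proof (rule hull_minimal)
    show "convex {x. m \<le> wt a x}" using convex_halfspace_ge[of m a] by (simp add: wt_inner)
    show "(\<Union>w\<in>mp_supp c. {x. real (fst w) \<le> fst x \<and> real (snd w) \<le> snd x}) \<subseteq> {x. m \<le> wt a x}"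
    proof safe
      fix w x assume w: "w \<in> mp_supp c" and x1: "real (fst w) \<le> fst x" and x2: "real (snd w) \<le> snd x"
      have "m \<le> wt a (pt w)" using assms(3) w by blast
      also have "\<dots> \<le> wt a x" using x1 x2 assms(1,2) by (simp add: wt_def pt_def add_mono mult_left_mono)
      finally show "m \<le> wt a x" .
    qed
  qed
  thus ?thesis using assms(4) by blast
qed

lemma in_face:
  assumes "p \<in> Gamma_plus c" "0 \<le> fst Q" "0 \<le> snd Q" "\<forall>w\<in>mp_supp c. wt Q p \<le> wt Q (pt w)"
  shows "p \<in> face c Q"
  using lowerL[OF assms(2,3,4)] assms(1) by (auto simp: face_def)

lemma yaxis:
  assumes mp: "mixed_poly c" and G: "(0, b) \<in> Gamma c"
  shows "\<forall>w\<in>mp_supp c. fst w = 0 \<longrightarrow> b \<le> snd w"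
    and "compact_face c {(0, real b)}"
    and "\<forall>P. first_edge_weight c P \<longrightarrow> (0, real b) \<in> face c P"
proof -
  obtain Q0 where Q0: "pos_weight Q0" "(0, real b) \<in> face c Q0"
    using G by (auto simp: Gamma_def compact_face_def)
  have bG: "(0, real b) \<in> Gamma_plus c" using Q0 by (simp add: face_def)
  show B: "\<forall>w\<in>mp_supp c. fst w = 0 \<longrightarrow> b \<le> snd w"
  proof safe
    fix w assume w: "w \<in> mp_supp c" "fst w = 0"
    have "wt Q0 (0, real b) \<le> wt Q0 (pt w)" using Q0(2) supp_Gp[OF w(1)] by (auto simp: face_def)
    hence "snd Q0 * real b \<le> snd Q0 * real (snd w)" using w(2) by (simp add: wt_def pt_def)
    thus "b \<le> snd w" using Q0(1) by (simp add: pos_weight_def)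
  qed
  have B1: "\<forall>w\<in>mp_supp c. real b \<le> wt (real b + 1, 1) (pt w)"
  proof
    fix w assume w: "w \<in> mp_supp c"
    show "real b \<le> wt (real b + 1, 1) (pt w)"
    proof (cases "fst w = 0")
      case True thus ?thesis using B w by (simp add: wt_def pt_def)
    next
      case False
      hence "1 \<le> real (fst w)" by simp
      hence "(real b + 1) * 1 \<le> (real b + 1) * real (fst w)" by (intro mult_left_mono) auto
      moreover have "wt (real b + 1, 1) (pt w) = (real b + 1) * real (fst w) + real (snd w)"
        by (simp add: wt_def pt_def)
      moreover have "0 \<le> real (snd w)" by simp
      ultimately show ?thesis by (smt (verit))
    qed
  qed
  show "compact_face c {(0, real b)}"
    unfolding compact_face_def
  proof (intro exI conjI)
    show "pos_weight (2 * (real b + 1), 1)" by (simp add: pos_weight_def)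
    show "{(0, real b)} = face c (2 * (real b + 1), 1)"
    proof
      have "\<forall>w\<in>mp_supp c. wt (2 * (real b + 1), 1) (0, real b) \<le> wt (2 * (real b + 1), 1) (pt w)"
      proof
        fix w assume w: "w \<in> mp_supp c"
        have "real b \<le> wt (real b + 1, 1) (pt w)" using B1 w by blast
        moreover have "(real b + 1) * real (fst w) \<le> 2 * (real b + 1) * real (fst w)"
          by (intro mult_right_mono) auto
        ultimately show "wt (2 * (real b + 1), 1) (0, real b) \<le> wt (2 * (real b + 1), 1) (pt w)"
          by (simp add: wt_def pt_def)
      qed
      thus "{(0, real b)} \<subseteq> face c (2 * (real b + 1), 1)"
        using in_face[OF bG] by simp
    next
      show "face c (2 * (real b + 1), 1) \<subseteq> {(0, real b)}"
      proof
        fix x assume x: "x \<in> face c (2 * (real b + 1), 1)"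
        hence xG: "x \<in> Gamma_plus c" and "wt (2 * (real b + 1), 1) x \<le> wt (2 * (real b + 1), 1) (0, real b)"
          using bG by (auto simp: face_def)
        hence u: "2 * (real b + 1) * fst x + snd x \<le> real b" by (simp add: wt_def)
        have l1: "real b \<le> (real b + 1) * fst x + snd x"
          using lowerL[of "(real b + 1, 1)" c "real b" x] B1 xG by (simp add: wt_def)
        have "\<forall>w\<in>mp_supp c. 0 \<le> wt (1, 0) (pt w)" by (simp add: wt_def pt_def)
        hence l2: "0 \<le> fst x" using lowerL[of "(1, 0)" c 0 x] xG by (simp add: wt_def)
        have t0: "0 \<le> (real b + 1) * fst x" using l2 by simp
        have "(real b + 1) * fst x \<le> 0" using u l1 by (simp add: algebra_simps)
        hence "(real b + 1) * fst x = 0" using t0 by linarith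
        hence f0: "fst x = 0" by simp
        hence "snd x = real b" using u l1 by simp
        thus "x \<in> {(0, real b)}" using f0 by (cases x) simp
      qed
    qed
    show "{(0, real b)} \<noteq> {}" by simp
  qed
  show "\<forall>P. first_edge_weight c P \<longrightarrow> (0, real b) \<in> face c P"
  proof (intro allI impI)
    fix P assume P: "first_edge_weight c P"
    hence Pp: "pos_weight P" and Pmax: "\<forall>Q. edge_weight c Q \<longrightarrow> fst Q / snd Q \<le> fst P / snd P"
      by (auto simp: first_edge_weight_def edge_weight_def)
    have p1: "0 < fst P" and p2: "0 < snd P" using Pp by (auto simp: pos_weight_def)
    show "(0, real b) \<in> face c P"
    proof (rule in_face[OF bG])
      show "0 \<le> fst P" "0 \<le> snd P" using p1 p2 by auto
      show "\<forall>w\<in>mp_supp c. wt P (0, real b) \<le> wt P (pt w)"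
      proof (rule ccontr)
        assume "\<not> (\<forall>w\<in>mp_supp c. wt P (0, real b) \<le> wt P (pt w))"
        then obtain w0 where w0: "w0 \<in> mp_supp c" "wt P (pt w0) < wt P (0, real b)"
          by (auto simp: not_le)
        have w0i: "fst P * real (fst w0) + snd P * real (snd w0) < snd P * real b"
          using w0(2) by (simp add: wt_def pt_def)
        have w01: "0 < fst w0"
        proof (rule ccontr)
          assume "\<not> 0 < fst w0"
          hence "fst w0 = 0" by simp
          hence "b \<le> snd w0" using B w0(1) by blast
          hence "snd P * real b \<le> snd P * real (snd w0)" using p2 by simp
          thus False using w0i \<open>fst w0 = 0\<close> by simp
        qed
        define T where "T = {w\<in>mp_supp c. 0 < fst w}"
        define s where "s w = (real b - real (snd w)) / real (fst w)" for w
        have finT: "finite T" using supp_fin[OF mp] by (simp add: T_def)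
        have w0T: "w0 \<in> T" using w0(1) w01 by (simp add: T_def)
        define M where "M = Max (s ` T)"
        have "M \<in> s ` T" unfolding M_def using finT w0T by (intro Max_in) auto
        then obtain ws where ws: "ws \<in> T" "s ws = M" by auto
        have Mge: "\<forall>w\<in>T. s w \<le> M" unfolding M_def using finT by auto
        have "fst P * real (fst w0) < snd P * (real b - real (snd w0))"
          using w0i by (simp add: algebra_simps)
        hence "fst P / snd P < s w0"
          using p2 w01 by (simp add: s_def field_simps)
        hence lt: "fst P / snd P < M" using Mge w0T by fastforce
        have Mpos: "0 < M" using lt p1 p2 by (smt (verit) divide_pos_pos)
        have wsf: "0 < fst ws" using ws(1) by (simp add: T_def)
        have low: "\<forall>w\<in>mp_supp c. wt (M, 1) (0, real b) \<le> wt (M, 1) (pt w)"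
        proof
          fix w assume w: "w \<in> mp_supp c"
          show "wt (M, 1) (0, real b) \<le> wt (M, 1) (pt w)"
          proof (cases "fst w = 0")
            case True thus ?thesis using B w by (simp add: wt_def pt_def)
          next
            case False
            hence "w \<in> T" using w by (simp add: T_def)
            hence "s w \<le> M" using Mge by blast
            hence "real b - real (snd w) \<le> M * real (fst w)"
              using False by (simp add: s_def pos_divide_le_eq)
            thus ?thesis by (simp add: wt_def pt_def)
          qed
        qed
        have f1: "(0, real b) \<in> face c (M, 1)"
          using in_face[OF bG, of "(M,1)"] low Mpos by simp
        have eqb: "wt (M, 1) (pt ws) = real b"
          using ws(2) wsf by (simp add: wt_def pt_def s_def field_simps)
        have low': "\<forall>w\<in>mp_supp c. real b \<le> wt (M, 1) (pt w)" using low by (simp add: wt_def)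
        have f2: "pt ws \<in> face c (M, 1)"
          using in_face[OF supp_Gp, of ws c "(M,1)"] low' Mpos eqb ws(1)
          by (simp add: T_def)
        have ne: "(0, real b) \<noteq> pt ws" using wsf by (simp add: pt_def)
        have "edge_weight c (M, 1)"
          unfolding edge_weight_def pos_weight_def fst_conv snd_conv using f1 f2 ne Mpos zero_less_one by blast
        hence "M \<le> fst P / snd P" using Pmax by fastforce
        thus False using lt by simp
      qed
    qed
  qed
qed

lemma xaxis:
  assumes mp: "mixed_poly c" and G: "(a, 0) \<in> Gamma c"
  shows "\<forall>w\<in>mp_supp c. snd w = 0 \<longrightarrow> a \<le> fst w"
    and "compact_face c {(real a, 0)}"
    and "\<forall>P. last_edge_weight c P \<longrightarrow> (real a, 0) \<in> face c P"
proof -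
  obtain Q0 where Q0: "pos_weight Q0" "(real a, 0) \<in> face c Q0"
    using G by (auto simp: Gamma_def compact_face_def)
  have bG: "(real a, 0) \<in> Gamma_plus c" using Q0 by (simp add: face_def)
  show B: "\<forall>w\<in>mp_supp c. snd w = 0 \<longrightarrow> a \<le> fst w"
  proof safe
    fix w assume w: "w \<in> mp_supp c" "snd w = 0"
    have "wt Q0 (real a, 0) \<le> wt Q0 (pt w)" using Q0(2) supp_Gp[OF w(1)] by (auto simp: face_def)
    hence "fst Q0 * real a \<le> fst Q0 * real (fst w)" using w(2) by (simp add: wt_def pt_def)
    thus "a \<le> fst w" using Q0(1) by (simp add: pos_weight_def)
  qed
  have B1: "\<forall>w\<in>mp_supp c. real a \<le> wt (1, real a + 1) (pt w)"
  proof
    fix w assume w: "w \<in> mp_supp c"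
    show "real a \<le> wt (1, real a + 1) (pt w)"
    proof (cases "snd w = 0")
      case True thus ?thesis using B w by (simp add: wt_def pt_def)
    next
      case False
      hence "1 \<le> real (snd w)" by simp
      hence "(real a + 1) * 1 \<le> (real a + 1) * real (snd w)" by (intro mult_left_mono) auto
      moreover have "wt (1, real a + 1) (pt w) = real (fst w) + (real a + 1) * real (snd w)"
        by (simp add: wt_def pt_def)
      moreover have "0 \<le> real (fst w)" by simp
      ultimately show ?thesis by (smt (verit))
    qed
  qed
  show "compact_face c {(real a, 0)}"
    unfolding compact_face_def
  proof (intro exI conjI)
    show "pos_weight (1, 2 * (real a + 1))" by (simp add: pos_weight_def)
    show "{(real a, 0)} = face c (1, 2 * (real a + 1))"
    proof
      have "\<forall>w\<in>mp_supp c. wt (1, 2 * (real a + 1)) (real a, 0) \<le> wt (1, 2 * (real a + 1)) (pt w)"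
      proof
        fix w assume w: "w \<in> mp_supp c"
        have "real a \<le> wt (1, real a + 1) (pt w)" using B1 w by blast
        moreover have "(real a + 1) * real (snd w) \<le> 2 * (real a + 1) * real (snd w)"
          by (intro mult_right_mono) auto
        ultimately show "wt (1, 2 * (real a + 1)) (real a, 0) \<le> wt (1, 2 * (real a + 1)) (pt w)"
          by (simp add: wt_def pt_def)
      qed
      thus "{(real a, 0)} \<subseteq> face c (1, 2 * (real a + 1))"
        using in_face[OF bG] by simp
    next
      show "face c (1, 2 * (real a + 1)) \<subseteq> {(real a, 0)}"
      proof
        fix x assume x: "x \<in> face c (1, 2 * (real a + 1))"
        hence xG: "x \<in> Gamma_plus c" and "wt (1, 2 * (real a + 1)) x \<le> wt (1, 2 * (real a + 1)) (real a, 0)"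
          using bG by (auto simp: face_def)
        hence u: "fst x + 2 * (real a + 1) * snd x \<le> real a" by (simp add: wt_def)
        have l1: "real a \<le> fst x + (real a + 1) * snd x"
          using lowerL[of "(1, real a + 1)" c "real a" x] B1 xG by (simp add: wt_def)
        have "\<forall>w\<in>mp_supp c. 0 \<le> wt (0, 1) (pt w)" by (simp add: wt_def pt_def)
        hence l2: "0 \<le> snd x" using lowerL[of "(0, 1)" c 0 x] xG by (simp add: wt_def)
        have t0: "0 \<le> (real a + 1) * snd x" using l2 by simp
        have "(real a + 1) * snd x \<le> 0" using u l1 by (simp add: algebra_simps)
        hence "(real a + 1) * snd x = 0" using t0 by linarith
        hence f0: "snd x = 0" by simp
        hence "fst x = real a" using u l1 by simp
        thus "x \<in> {(real a, 0)}" using f0 by (cases x) simp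
      qed
    qed
    show "{(real a, 0)} \<noteq> {}" by simp
  qed
  show "\<forall>P. last_edge_weight c P \<longrightarrow> (real a, 0) \<in> face c P"
  proof (intro allI impI)
    fix P assume P: "last_edge_weight c P"
    hence Pp: "pos_weight P" and Pmin: "\<forall>Q. edge_weight c Q \<longrightarrow> fst P / snd P \<le> fst Q / snd Q"
      by (auto simp: last_edge_weight_def edge_weight_def)
    have p1: "0 < fst P" and p2: "0 < snd P" using Pp by (auto simp: pos_weight_def)
    show "(real a, 0) \<in> face c P"
    proof (rule in_face[OF bG])
      show "0 \<le> fst P" "0 \<le> snd P" using p1 p2 by auto
      show "\<forall>w\<in>mp_supp c. wt P (real a, 0) \<le> wt P (pt w)"
      proof (rule ccontr)
        assume "\<not> (\<forall>w\<in>mp_supp c. wt P (real a, 0) \<le> wt P (pt w))"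
        then obtain w0 where w0: "w0 \<in> mp_supp c" "wt P (pt w0) < wt P (real a, 0)"
          by (auto simp: not_le)
        have w0i: "fst P * real (fst w0) + snd P * real (snd w0) < fst P * real a"
          using w0(2) by (simp add: wt_def pt_def)
        have w01: "0 < snd w0"
        proof (rule ccontr)
          assume "\<not> 0 < snd w0"
          hence "snd w0 = 0" by simp
          hence "a \<le> fst w0" using B w0(1) by blast
          hence "fst P * real a \<le> fst P * real (fst w0)" using p1 by simp
          thus False using w0i \<open>snd w0 = 0\<close> by simp
        qed
        define T where "T = {w\<in>mp_supp c. 0 < snd w}"
        define s where "s w = (real a - real (fst w)) / real (snd w)" for w
        have finT: "finite T" using supp_fin[OF mp] by (simp add: T_def)
        have w0T: "w0 \<in> T" using w0(1) w01 by (simp add: T_def)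
        define M where "M = Max (s ` T)"
        have "M \<in> s ` T" unfolding M_def using finT w0T by (intro Max_in) auto
        then obtain ws where ws: "ws \<in> T" "s ws = M" by auto
        have Mge: "\<forall>w\<in>T. s w \<le> M" unfolding M_def using finT by auto
        have "snd P * real (snd w0) < fst P * (real a - real (fst w0))"
          using w0i by (simp add: algebra_simps)
        hence "snd P / fst P < s w0"
          using p1 w01 by (simp add: s_def field_simps)
        hence lt: "snd P / fst P < M" using Mge w0T by fastforce
        have Mpos: "0 < M" using lt p1 p2 by (smt (verit) divide_pos_pos)
        have lt2: "1 / M < fst P / snd P"
        proof -
          have "snd P < M * fst P" using lt p1 by (simp add: pos_divide_less_eq)
          thus ?thesis using Mpos p2 by (simp add: field_simps)
        qed
        have wsf: "0 < snd ws" using ws(1) by (simp add: T_def)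
        have low: "\<forall>w\<in>mp_supp c. wt (1, M) (real a, 0) \<le> wt (1, M) (pt w)"
        proof
          fix w assume w: "w \<in> mp_supp c"
          show "wt (1, M) (real a, 0) \<le> wt (1, M) (pt w)"
          proof (cases "snd w = 0")
            case True thus ?thesis using B w by (simp add: wt_def pt_def)
          next
            case False
            hence "w \<in> T" using w by (simp add: T_def)
            hence "s w \<le> M" using Mge by blast
            hence "real a - real (fst w) \<le> M * real (snd w)"
              using False by (simp add: s_def pos_divide_le_eq)
            thus ?thesis by (simp add: wt_def pt_def)
          qed
        qed
        have f1: "(real a, 0) \<in> face c (1, M)"
          using in_face[OF bG, of "(1,M)"] low Mpos by simp
        have eqb: "wt (1, M) (pt ws) = real a"
          using ws(2) wsf by (simp add: wt_def pt_def s_def field_simps)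
        have low': "\<forall>w\<in>mp_supp c. real a \<le> wt (1, M) (pt w)" using low by (simp add: wt_def)
        have f2: "pt ws \<in> face c (1, M)"
          using in_face[OF supp_Gp, of ws c "(1,M)"] low' Mpos eqb ws(1)
          by (simp add: T_def)
        have ne: "(real a, 0) \<noteq> pt ws" using wsf by (simp add: pt_def)
        have "edge_weight c (1, M)"
          unfolding edge_weight_def pos_weight_def fst_conv snd_conv using f1 f2 ne Mpos zero_less_one by blast
        hence "fst P / snd P \<le> 1 / M" using Pmin by fastforce
        thus False using lt2 by simp
      qed
    qed
  qed
qed

definition mt :: "mixed_poly \<Rightarrow> (nat \<times> nat) \<times> (nat \<times> nat) \<Rightarrow> complex \<times> complex \<Rightarrow> complex" where
  "mt c k z = c k * fst z ^ fst (fst k) * snd z ^ snd (fst k)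
          * cnj (fst z) ^ fst (snd k) * cnj (snd z) ^ snd (snd k)"

lemma mp_eval_K:
  assumes "finite K" "{k. c' k \<noteq> 0} \<subseteq> K"
  shows "mp_eval c' z = (\<Sum>k\<in>K. mt c' k z)"
  unfolding mp_eval_def mt_def by (rule sum.mono_neutral_left) (use assms in auto)

lemma fp_sub: "{k. face_part c D k \<noteq> 0} \<subseteq> {k. c k \<noteq> 0}"
  by (auto simp: face_part_def)

lemma ypt:
  assumes "(0, real b) \<in> F" "\<forall>j::nat. (0, real j) \<in> F \<longrightarrow> j = b"
  shows "mt (face_part c {(0, real b)}) k (u, w) = mt (face_part c F) k (0, w)"
proof (cases "fst (fst k) = 0 \<and> fst (snd k) = 0")
  case True
  define j where "j = snd (fst k) + snd (snd k)"
  have iff: "((0::real, real j) \<in> {(0, real b)}) = ((0, real j) \<in> F)"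
  proof
    assume "(0::real, real j) \<in> {(0, real b)}"
    hence "j = b" by simp
    thus "(0, real j) \<in> F" using assms(1) by simp
  next
    assume "(0, real j) \<in> F"
    hence "j = b" using assms(2) by blast
    thus "(0::real, real j) \<in> {(0, real b)}" by simp
  qed
  have c1: "face_part c {(0, real b)} k = face_part c F k"
    unfolding face_part_def using True iff by (simp del: of_nat_add add: j_def)
  show ?thesis using True by (simp add: mt_def c1)
next
  case False
  have nz: "real (fst (fst k)) + real (fst (snd k)) \<noteq> 0"
    using False by (simp add: add_nonneg_eq_0_iff)
  have g0: "face_part c {(0, real b)} k = 0" by (simp add: face_part_def nz)
  have "fst (0::complex, w) ^ fst (fst k) * cnj (fst (0::complex, w)) ^ fst (snd k) = 0"
    using False by (auto simp: power_0_left)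
  hence "mt (face_part c F) k (0, w) = 0" unfolding mt_def by (simp add: algebra_simps) blast
  thus ?thesis using g0 by (simp add: mt_def)
qed

lemma xpt:
  assumes "(real a, 0) \<in> F" "\<forall>j::nat. (real j, 0) \<in> F \<longrightarrow> j = a"
  shows "mt (face_part c {(real a, 0)}) k (u, w) = mt (face_part c F) k (u, 0)"
proof (cases "snd (fst k) = 0 \<and> snd (snd k) = 0")
  case True
  define j where "j = fst (fst k) + fst (snd k)"
  have iff: "((real j, 0::real) \<in> {(real a, 0)}) = ((real j, 0) \<in> F)"
  proof
    assume "(real j, 0::real) \<in> {(real a, 0)}"
    hence "j = a" by simp
    thus "(real j, 0) \<in> F" using assms(1) by simp
  next
    assume "(real j, 0) \<in> F"
    hence "j = a" using assms(2) by blast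
    thus "(real j, 0::real) \<in> {(real a, 0)}" by simp
  qed
  have c1: "face_part c {(real a, 0)} k = face_part c F k"
    unfolding face_part_def using True iff by (simp del: of_nat_add add: j_def)
  show ?thesis using True by (simp add: mt_def c1)
next
  case False
  have nz: "real (snd (fst k)) + real (snd (snd k)) \<noteq> 0"
    using False by (simp add: add_nonneg_eq_0_iff)
  have g0: "face_part c {(real a, 0)} k = 0" by (simp add: face_part_def nz)
  have "snd (u, 0::complex) ^ snd (fst k) * cnj (snd (u, 0::complex)) ^ snd (snd k) = 0"
    using False by (auto simp: power_0_left)
  hence "mt (face_part c F) k (u, 0) = 0" unfolding mt_def by (simp add: algebra_simps) blast
  thus ?thesis using g0 by (simp add: mt_def)
qed

lemma yaxis_eval:
  assumes "mixed_poly c" "(0, real b) \<in> F" "\<forall>j::nat. (0, real j) \<in> F \<longrightarrow> j = b"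
  shows "mp_eval (face_part c {(0, real b)}) (u, w) = mp_eval (face_part c F) (0, w)"
proof -
  have fin: "finite {k. c k \<noteq> 0}" using assms(1) by (simp add: mixed_poly_def)
  show ?thesis
    apply (subst mp_eval_K[OF fin fp_sub])+
    apply (rule sum.cong[OF refl])
    by (rule ypt[OF assms(2,3)])
qed

lemma xaxis_eval:
  assumes "mixed_poly c" "(real a, 0) \<in> F" "\<forall>j::nat. (real j, 0) \<in> F \<longrightarrow> j = a"
  shows "mp_eval (face_part c {(real a, 0)}) (u, w) = mp_eval (face_part c F) (u, 0)"
proof -
  have fin: "finite {k. c k \<noteq> 0}" using assms(1) by (simp add: mixed_poly_def)
  show ?thesis
    apply (subst mp_eval_K[OF fin fp_sub])+
    apply (rule sum.cong[OF refl])
    by (rule xpt[OF assms(2,3)])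
qed

lemma noncrit_y:
  assumes eq: "\<forall>u w. mp_eval g (u,w) = mp_eval h (0,w)"
    and nc: "\<not> critical_point (mp_eval g) (1,v)"
  shows "\<not> critical_point (mp_eval h) (0,v)"
proof
  assume "critical_point (mp_eval h) (0,v)"
  then obtain D where D: "(mp_eval h has_derivative D) (at (0,v))" "\<not> surj D"
    by (auto simp: critical_point_def)
  have i: "((\<lambda>k::complex. (0::complex, k)) has_derivative (\<lambda>k. (0, k))) (at v)"
    by (intro has_derivative_Pair has_derivative_const has_derivative_ident)
  have "((\<lambda>k. mp_eval h (0,k)) has_derivative (\<lambda>k. D (0,k))) (at v)"
    using has_derivative_compose[OF i, of "mp_eval h" D] D(1) by simp
  hence dh2: "((\<lambda>z::complex\<times>complex. mp_eval h (0, snd z)) has_derivative (\<lambda>z::complex\<times>complex. D (0, snd z))) (at (1,v))"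
    apply -
    apply (rule has_derivative_compose[where f=snd and g="\<lambda>k. mp_eval h (0,k)" and g'="\<lambda>k. D (0,k)", simplified])
     apply (rule bounded_linear_imp_has_derivative[OF bounded_linear_snd])
    by simp
  have eqg: "mp_eval g = (\<lambda>z::complex\<times>complex. mp_eval h (0, snd z))"
    using eq by (auto intro!: ext)
  have dg: "(mp_eval g has_derivative (\<lambda>z::complex\<times>complex. D (0, snd z))) (at (1,v))" unfolding eqg by (rule dh2)
  have "surj (\<lambda>z::complex\<times>complex. D (0, snd z))"
  proof (rule ccontr)
    assume ns: "\<not> surj (\<lambda>z::complex\<times>complex. D (0, snd z))"
    have "critical_point (mp_eval g) (1,v)" unfolding critical_point_def
      by (rule exI[of _ "\<lambda>z::complex\<times>complex. D (0, snd z)"], rule conjI[OF dg ns])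
    with nc show False by contradiction
  qed
  hence "surj D" unfolding surj_def by blast
  with D(2) show False by simp
qed

lemma noncrit_x:
  assumes eq: "\<forall>u w. mp_eval g (u,w) = mp_eval h (u,0)"
    and nc: "\<not> critical_point (mp_eval g) (v,1)"
  shows "\<not> critical_point (mp_eval h) (v,0)"
proof
  assume "critical_point (mp_eval h) (v,0)"
  then obtain D where D: "(mp_eval h has_derivative D) (at (v,0))" "\<not> surj D"
    by (auto simp: critical_point_def)
  have i: "((\<lambda>k::complex. (k, 0::complex)) has_derivative (\<lambda>k. (k, 0))) (at v)"
    by (intro has_derivative_Pair has_derivative_const has_derivative_ident)
  have "((\<lambda>k. mp_eval h (k,0)) has_derivative (\<lambda>k. D (k,0))) (at v)"
    using has_derivative_compose[OF i, of "mp_eval h" D] D(1) by simp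
  hence dh2: "((\<lambda>z::complex\<times>complex. mp_eval h (fst z, 0)) has_derivative (\<lambda>z::complex\<times>complex. D (fst z, 0))) (at (v,1))"
    apply -
    apply (rule has_derivative_compose[where f=fst and g="\<lambda>k. mp_eval h (k,0)" and g'="\<lambda>k. D (k,0)", simplified])
     apply (rule bounded_linear_imp_has_derivative[OF bounded_linear_fst])
    by simp
  have eqg: "mp_eval g = (\<lambda>z::complex\<times>complex. mp_eval h (fst z, 0))"
    using eq by (auto intro!: ext)
  have dg: "(mp_eval g has_derivative (\<lambda>z::complex\<times>complex. D (fst z, 0))) (at (v,1))" unfolding eqg by (rule dh2)
  have "surj (\<lambda>z::complex\<times>complex. D (fst z, 0))"
  proof (rule ccontr)
    assume ns: "\<not> surj (\<lambda>z::complex\<times>complex. D (fst z, 0))"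
    have "critical_point (mp_eval g) (v,1)" unfolding critical_point_def
      by (rule exI[of _ "\<lambda>z::complex\<times>complex. D (fst z, 0)"], rule conjI[OF dg ns])
    with nc show False by contradiction
  qed
  hence "surj D" unfolding surj_def by blast
  with D(2) show False by simp
qed

theorem mainTheorem4:
  fixes c :: mixed_poly
  assumes "mixed_poly c"
    and "\<exists>D. compact_edge c D"
    and "convenient c"
    and "newton_nondegenerate c"
  shows "inner_nondegenerate_boundary c"
proof -
  obtain a b where a: "(a, 0) \<in> Gamma c" and b: "(0, b) \<in> Gamma c"
    using assms(3) by (auto simp: convenient_def)
  note Y = yaxis[OF assms(1) b] and X = xaxis[OF assms(1) a]
  have ND: "\<And>D. compact_face c D \<Longrightarrow> no_crit_on (face_part c D) torus"
    using assms(4) by (simp add: newton_nondegenerate_def)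
  have ew: "\<And>P. edge_weight c P \<Longrightarrow> compact_face c (face c P)"
    by (auto simp: compact_face_def edge_weight_def)
  show ?thesis
    unfolding inner_nondegenerate_boundary_def
  proof (intro conjI allI impI)
    fix P assume P: "first_edge_weight c P"
    hence Pe: "edge_weight c P" by (simp add: first_edge_weight_def)
    have p2: "0 < snd P" using Pe by (simp add: edge_weight_def pos_weight_def)
    let ?F = "face c P"
    have bF: "(0, real b) \<in> ?F" using Y(3) P by blast
    have uniq: "\<forall>j::nat. (0, real j) \<in> ?F \<longrightarrow> j = b"
    proof safe
      fix j :: nat assume j: "(0, real j) \<in> ?F"
      have "wt P (0, real j) \<le> wt P (0, real b)" "wt P (0, real b) \<le> wt P (0, real j)"
        using j bF unfolding face_def mem_Collect_eq by blast+
      hence "snd P * real j \<le> snd P * real b" "snd P * real b \<le> snd P * real j" by (simp_all add: wt_def)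
      hence "snd P * real j = snd P * real b" by linarith
      thus "j = b" using p2 by simp
    qed
    show "no_crit_on (face_part c ?F) {z. snd z \<noteq> 0}"
      unfolding no_crit_on_def
    proof safe
      fix u v assume v: "snd (u, v) \<noteq> 0" and z0: "mp_eval (face_part c ?F) (u, v) = 0"
        and cr: "critical_point (mp_eval (face_part c ?F)) (u, v)"
      show False
      proof (cases "u = 0")
        case False
        hence "(u,v) \<in> torus" using v by (simp add: torus_def)
        thus False using ND[OF ew[OF Pe]] z0 cr by (simp add: no_crit_on_def)
      next
        case True
        have eq: "\<forall>u w. mp_eval (face_part c {(0, real b)}) (u,w) = mp_eval (face_part c ?F) (0,w)"
          using yaxis_eval[OF assms(1) bF uniq] by blast
        have "(1, v) \<in> torus" using v by (simp add: torus_def)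
        moreover have "mp_eval (face_part c {(0, real b)}) (1, v) = 0" using eq z0 True by simp
        ultimately have "\<not> critical_point (mp_eval (face_part c {(0, real b)})) (1, v)"
          using ND[OF Y(2)] by (simp add: no_crit_on_def)
        from noncrit_y[OF eq this] cr True show False by simp
      qed
    qed
  next
    fix P assume P: "last_edge_weight c P"
    hence Pe: "edge_weight c P" by (simp add: last_edge_weight_def)
    have p1: "0 < fst P" using Pe by (simp add: edge_weight_def pos_weight_def)
    let ?F = "face c P"
    have aF: "(real a, 0) \<in> ?F" using X(3) P by blast
    have uniq: "\<forall>j::nat. (real j, 0) \<in> ?F \<longrightarrow> j = a"
    proof safe
      fix j :: nat assume j: "(real j, 0) \<in> ?F"
      have "wt P (real j, 0) \<le> wt P (real a, 0)" "wt P (real a, 0) \<le> wt P (real j, 0)"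
        using j aF unfolding face_def mem_Collect_eq by blast+
      hence "fst P * real j \<le> fst P * real a" "fst P * real a \<le> fst P * real j" by (simp_all add: wt_def)
      hence "fst P * real j = fst P * real a" by linarith
      thus "j = a" using p1 by simp
    qed
    show "no_crit_on (face_part c ?F) {z. fst z \<noteq> 0}"
      unfolding no_crit_on_def
    proof safe
      fix u v assume u: "fst (u, v) \<noteq> 0" and z0: "mp_eval (face_part c ?F) (u, v) = 0"
        and cr: "critical_point (mp_eval (face_part c ?F)) (u, v)"
      show False
      proof (cases "v = 0")
        case False
        hence "(u,v) \<in> torus" using u by (simp add: torus_def)
        thus False using ND[OF ew[OF Pe]] z0 cr by (simp add: no_crit_on_def)
      next
        case True
        have eq: "\<forall>u w. mp_eval (face_part c {(real a, 0)}) (u,w) = mp_eval (face_part c ?F) (u,0)"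
          using xaxis_eval[OF assms(1) aF uniq] by blast
        have "(u, 1) \<in> torus" using u by (simp add: torus_def)
        moreover have "mp_eval (face_part c {(real a, 0)}) (u, 1) = 0" using eq z0 True by simp
        ultimately have "\<not> critical_point (mp_eval (face_part c {(real a, 0)})) (u, 1)"
          using ND[OF X(2)] by (simp add: no_crit_on_def)
        from noncrit_x[OF eq this] cr True show False by simp
      qed
    qed
  next
    fix D assume "compact_edge c D"
    then obtain Q where "edge_weight c Q" "D = face c Q" by (auto simp: compact_edge_def)
    thus "no_crit_on (face_part c D) torus" using ND[OF ew[OF \<open>edge_weight c Q\<close>]] by simp
  next
    fix x assume "nonextreme_vertex c x"
    hence "compact_face c {x}" by (simp add: nonextreme_vertex_def vertex_def)
    thus "no_crit_on (face_part c {x}) torus" by (rule ND)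
  qed
qed

end
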